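(* (a) For every integer $n \geq 4$, $8\left\lfloor \frac{n}{10} \right\rfloor + c(n_{10}) \leq \gamma_{b,2}(P_4 \square P_n)$, where $n_{10} \in \{0,1,\dots,9\}$ is the least residue of $n$ modulo $10$ and $c(0)=0$, $c(1)=2$, $c(2)=2$, $c(3)=3$, $c(4)=4$, $c(5)=5$, $c(6)=5$, $c(7)=6$, $c(8)=7$, $c(9)=8$. (b) For every integer $n \geq 4$ with $n \equiv 1, 4, 5,$ or $9 \pmod{10}$, equality holds: $\gamma_{b,2}(P_4 \square P_n) = 8\left\lfloor \frac{n}{10} \right\rfloor + c(n_{10})$.
   Context: For a graph $G$, a $2$-limited broadcast is a function $f: V(G) \to \{0,1,2\}$. A vertex $u$ hears the broadcast from $v$ if $f(v) > 0$ and $d(u,v) \leq f(v)$, where $d$ is the distance in $G$. The broadcast $f$ is dominating if every vertex of $G$ hears the broadcast from some vertex. The cost of $f$ is $\sum_{v \in V(G)} f(v)$. The $2$-limited broadcast domination number $\gamma_{b,2}(G)$ is the minimum cost of a $2$-limited dominating broadcast on $G$. $P_n$ denotes the path on $n$ vertices and $\square$ the Cartesian product of graphs. *)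

theory Defs
  imports Main
begin

fun walk :: "'a set \<Rightarrow> ('a \<Rightarrow> 'a \<Rightarrow> bool) \<Rightarrow> nat \<Rightarrow> 'a \<Rightarrow> 'a \<Rightarrow> bool" where
  "walk V E 0 u v = (u \<in> V \<and> u = v)"
| "walk V E (Suc k) u v = (\<exists>w. u \<in> V \<and> E u w \<and> walk V E k w v)"

(* graph distance (used only for connected graphs) *)
definition gdist :: "'a set \<Rightarrow> ('a \<Rightarrow> 'a \<Rightarrow> bool) \<Rightarrow> 'a \<Rightarrow> 'a \<Rightarrow> nat" where
  "gdist V E u v = (LEAST k. walk V E k u v)"

definition path_adj :: "nat \<Rightarrow> nat \<Rightarrow> bool" where
  "path_adj i j \<longleftrightarrow> i = j + 1 \<or> j = i + 1"

definition path_verts :: "nat \<Rightarrow> nat set" where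
  "path_verts n = {0..<n}"

definition cart_verts :: "'a set \<Rightarrow> 'b set \<Rightarrow> ('a \<times> 'b) set" where
  "cart_verts V1 V2 = V1 \<times> V2"

definition cart_adj :: "('a \<Rightarrow> 'a \<Rightarrow> bool) \<Rightarrow> ('b \<Rightarrow> 'b \<Rightarrow> bool) \<Rightarrow> ('a \<times> 'b) \<Rightarrow> ('a \<times> 'b) \<Rightarrow> bool" where
  "cart_adj E1 E2 x y \<longleftrightarrow>
     (fst x = fst y \<and> E2 (snd x) (snd y)) \<or> (snd x = snd y \<and> E1 (fst x) (fst y))"

definition dom_broadcast2 :: "'a set \<Rightarrow> ('a \<Rightarrow> 'a \<Rightarrow> bool) \<Rightarrow> ('a \<Rightarrow> nat) \<Rightarrow> bool" where
  "dom_broadcast2 V E f \<longleftrightarrow>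
     (\<forall>v\<in>V. f v \<le> 2) \<and>
     (\<forall>u\<in>V. \<exists>v\<in>V. f v > 0 \<and> gdist V E u v \<le> f v)"

definition broadcast_cost :: "'a set \<Rightarrow> ('a \<Rightarrow> nat) \<Rightarrow> nat" where
  "broadcast_cost V f = (\<Sum>v\<in>V. f v)"

definition gamma_b2 :: "'a set \<Rightarrow> ('a \<Rightarrow> 'a \<Rightarrow> bool) \<Rightarrow> nat" where
  "gamma_b2 V E = (LEAST c. \<exists>f. dom_broadcast2 V E f \<and> broadcast_cost V f = c)"

definition grid_gamma :: "nat \<Rightarrow> nat \<Rightarrow> nat" where
  "grid_gamma m n = gamma_b2 (cart_verts (path_verts m) (path_verts n)) (cart_adj path_adj path_adj)"

definition cfun :: "nat \<Rightarrow> nat" where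
  "cfun r = [0, 2, 2, 3, 4, 5, 5, 6, 7, 8] ! r"

end

theory Submission
  imports Defs
begin
definition dd :: "nat \<Rightarrow> nat \<Rightarrow> nat" where "dd x y = (if x \<le> y then y - x else x - y)"
definition md :: "nat \<times> nat \<Rightarrow> nat \<times> nat \<Rightarrow> nat" where "md u v = dd (fst u) (fst v) + dd (snd u) (snd v)"
abbreviation GV :: "nat \<Rightarrow> (nat \<times> nat) set" where "GV n \<equiv> cart_verts (path_verts 4) (path_verts n)"
abbreviation GE :: "nat \<times> nat \<Rightarrow> nat \<times> nat \<Rightarrow> bool" where "GE \<equiv> cart_adj path_adj path_adj"

lemma walk_md: "walk V GE k u v \<Longrightarrow> md u v \<le> k \<and> u \<in> V \<and> v \<in> V"
proof (induction k arbitrary: u)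
  case 0 then show ?case by (auto simp add: md_def dd_def split: if_splits)
next
  case (Suc k)
  then obtain w where w: "u \<in> V" "GE u w" "walk V GE k w v" by auto
  with Suc.IH have "md w v \<le> k" "v \<in> V" by auto
  moreover have "md u v \<le> md w v + 1" using w(2)
    by (cases u, cases w, cases v) (auto simp: md_def dd_def cart_adj_def path_adj_def)
  ultimately show ?case using w by auto
qed

lemma walk_ex: "u \<in> GV n \<Longrightarrow> v \<in> GV n \<Longrightarrow> walk (GV n) GE (md u v) u v"
proof (induction "md u v" arbitrary: u)
  case 0
  then have "u = v" by (cases u, cases v) (auto simp: md_def dd_def split: if_splits)
  then show ?case using 0 by (metis walk.simps(1))
next
  case (Suc k)
  obtain a b where u: "u = (a,b)" by fastforce
  obtain c d where v: "v = (c,d)" by fastforce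
  have "\<exists>w. w \<in> GV n \<and> GE u w \<and> md w v = k"
  proof -
    have A: "a < 4" "b < n" "c < 4" "d < n" using Suc.prems u v by (auto simp: cart_verts_def path_verts_def)
    show ?thesis
    proof (cases "a < c")
      case True then show ?thesis using A Suc.hyps(2) u v
        by (intro exI[of _ "(a+1,b)"]) (auto simp: cart_verts_def path_verts_def cart_adj_def path_adj_def md_def dd_def split: if_splits)
    next
      case F1: False show ?thesis
      proof (cases "c < a")
        case True then show ?thesis using A Suc.hyps(2) u v
          by (intro exI[of _ "(a-1,b)"]) (auto simp: cart_verts_def path_verts_def cart_adj_def path_adj_def md_def dd_def split: if_splits)
      next
        case F2: False show ?thesis
        proof (cases "b < d")
          case True then show ?thesis using A F1 F2 Suc.hyps(2) u v
            by (intro exI[of _ "(a,b+1)"]) (auto simp: cart_verts_def path_verts_def cart_adj_def path_adj_def md_def dd_def split: if_splits)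
        next
          case False then show ?thesis using A F1 F2 Suc.hyps(2) u v
            by (intro exI[of _ "(a,b-1)"]) (auto simp: cart_verts_def path_verts_def cart_adj_def path_adj_def md_def dd_def split: if_splits)
        qed
      qed
    qed
  qed
  then obtain w where w: "w \<in> GV n" "GE u w" "md w v = k" by blast
  from Suc.hyps(1)[of w] w Suc.prems have "walk (GV n) GE k w v" by simp
  then show ?case using w Suc.prems Suc.hyps(2) by (metis walk.simps(2))
qed

lemma gdist_md: "u \<in> GV n \<Longrightarrow> v \<in> GV n \<Longrightarrow> gdist (GV n) GE u v = md u v"
  unfolding gdist_def
  by (rule Least_equality) (auto dest: walk_md intro: walk_ex)


definition wt :: "nat \<times> nat \<Rightarrow> nat" where
  "wt u = (if snd u = 0 then (if fst u = 0 \<or> fst u = 3 then 10 else 5)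
          else if snd u = 1 then (if fst u = 0 \<or> fst u = 3 then 4 else 0)
          else (if fst u = 0 \<or> fst u = 3 then 6 else 2))"

lemma GV_eq: "GV n = {0..<4} \<times> {0..<n}" by (simp add: cart_verts_def path_verts_def)

lemma inner_bound:
  fixes g :: "nat \<Rightarrow> nat"
  assumes "\<And>j. j + 2 < c \<or> c + 2 < j \<Longrightarrow> g j = 0"
  shows "(\<Sum>j\<in>{0..<n}. g j) \<le> (\<Sum>j\<in>{c-2..c+2}. g j)"
proof -
  have "(\<Sum>j\<in>{0..<n}. g j) = (\<Sum>j\<in>{0..<n} \<inter> {c-2..c+2}. g j)"
    by (rule sum.mono_neutral_right) (auto intro!: assms)
  also have "\<dots> \<le> (\<Sum>j\<in>{c-2..c+2}. g j)" by (rule sum_mono2) auto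
  finally show ?thesis .
qed

lemma ball_bound:
  assumes "a < 4" "r = 1 \<or> r = 2"
  shows "(\<Sum>u\<in>GV n. if md u (a,c) \<le> r then wt u else 0) \<le> 20 * r"
proof -
  let ?g = "\<lambda>i j. if md (i,j) (a,c) \<le> r then wt (i,j) else 0"
  have "(\<Sum>u\<in>GV n. if md u (a,c) \<le> r then wt u else 0) = (\<Sum>i\<in>{0..<4}. \<Sum>j\<in>{0..<n}. ?g i j)"
    unfolding GV_eq by (simp add: sum.cartesian_product)
  also have "\<dots> \<le> (\<Sum>i\<in>{0..<4}. \<Sum>j\<in>{c-2..c+2}. ?g i j)"
    by (rule sum_mono, rule inner_bound) (use assms in \<open>auto simp: md_def dd_def\<close>)
  also have "\<dots> \<le> 20 * r"
  proof -
    have a4: "a = 0 \<or> a = 1 \<or> a = 2 \<or> a = 3" using assms by auto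
    have s: "{0..<4::nat} = {0,1,2,3}" by auto
    show ?thesis
    proof (cases "c \<ge> 2")
      case True
      have iv: "{c-2..c+2} = {c-2,c-1,c,c+1,c+2}" using True by auto
      have c5: "c = 2 \<or> c = 3 \<or> (\<exists>l. c = l + 4)" using True by presburger
      show ?thesis unfolding iv using c5 a4 assms(2)
        apply (elim disjE exE)
        apply (simp_all add: s md_def dd_def wt_def)
        done
    next
      case False
      then have c5: "c = 0 \<or> c = 1" by auto
      show ?thesis using c5 a4 assms(2)
        apply (elim disjE exE)
        apply (simp_all add: s md_def dd_def wt_def)
        done
    qed
  qed
  finally show ?thesis .
qed

lemma total_wt_aux: "n \<ge> 2 \<Longrightarrow> (\<Sum>j\<in>{0..<n}. \<Sum>i\<in>{0..<4::nat}. wt (i,j)) = 16*n+6"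
proof (induction n rule: dec_induct)
  case base
  have s: "{0..<4::nat} = {0,1,2,3}" by auto
  show ?case by (simp add: s wt_def numeral_eq_Suc)
next
  case (step m)
  have s: "{0..<4::nat} = {0,1,2,3}" by auto
  have "(\<Sum>i\<in>{0..<4::nat}. wt (i,m)) = 16" using step(1) by (simp add: s wt_def)
  then show ?case using step by simp
qed

lemma total_wt: "n \<ge> 2 \<Longrightarrow> (\<Sum>u\<in>GV n. wt u) = 16*n+6"
proof -
  assume n: "n \<ge> 2"
  have "(\<Sum>u\<in>GV n. wt u) = (\<Sum>i\<in>{0..<4::nat}. \<Sum>j\<in>{0..<n}. wt (i,j))"
    unfolding GV_eq by (simp add: sum.cartesian_product)
  also have "\<dots> = (\<Sum>j\<in>{0..<n}. \<Sum>i\<in>{0..<4::nat}. wt (i,j))" by (rule sum.swap)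
  finally show ?thesis using total_wt_aux n by simp
qed

lemma lower:
  assumes "dom_broadcast2 (GV n) GE f" "n \<ge> 2"
  shows "16*n+6 \<le> 20 * broadcast_cost (GV n) f"
proof -
  have fin: "finite (GV n)" by (simp add: GV_eq)
  let ?h = "\<lambda>u v. if 0 < f v \<and> md u v \<le> f v then wt u else 0"
  have "16*n+6 = (\<Sum>u\<in>GV n. wt u)" using total_wt assms(2) by simp
  also have "\<dots> \<le> (\<Sum>u\<in>GV n. \<Sum>v\<in>GV n. ?h u v)"
  proof (rule sum_mono)
    fix u assume u: "u \<in> GV n"
    then obtain v where v: "v \<in> GV n" "0 < f v" "gdist (GV n) GE u v \<le> f v"
      using assms(1) unfolding dom_broadcast2_def by blast
    then have "md u v \<le> f v" using gdist_md u by simp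
    then have "?h u v = wt u" using v by simp
    moreover have "?h u v \<le> (\<Sum>v\<in>GV n. ?h u v)"
      by (rule member_le_sum) (use v fin in auto)
    ultimately show "wt u \<le> (\<Sum>v\<in>GV n. ?h u v)" by simp
  qed
  also have "\<dots> = (\<Sum>v\<in>GV n. \<Sum>u\<in>GV n. ?h u v)" by (rule sum.swap)
  also have "\<dots> \<le> (\<Sum>v\<in>GV n. 20 * f v)"
  proof (rule sum_mono)
    fix v assume v: "v \<in> GV n"
    obtain a c where ac: "v = (a,c)" by fastforce
    have a: "a < 4" using v ac by (simp add: GV_eq)
    show "(\<Sum>u\<in>GV n. ?h u v) \<le> 20 * f v"
    proof (cases "f v = 0")
      case True then show ?thesis by simp
    next
      case False
      then have f12: "f v = 1 \<or> f v = 2" using assms(1) v unfolding dom_broadcast2_def by force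
      have "(\<Sum>u\<in>GV n. ?h u v) = (\<Sum>u\<in>GV n. if md u (a,c) \<le> f v then wt u else 0)"
        using False ac by simp
      also have "\<dots> \<le> 20 * f v" by (rule ball_bound[OF a f12])
      finally show ?thesis .
    qed
  qed
  also have "\<dots> = 20 * broadcast_cost (GV n) f"
    by (simp add: broadcast_cost_def sum_distrib_left)
  finally show ?thesis .
qed

definition qs :: "nat \<Rightarrow> nat \<Rightarrow> nat" where
  "qs i s = (if (i = 0 \<and> (s = 2 \<or> s = 6)) \<or> (i = 3 \<and> (s = 1 \<or> s = 7)) then 1
             else if (i = 1 \<and> s = 9) \<or> (i = 2 \<and> s = 4) then 2 else 0)"

definition qv :: "nat \<Rightarrow> nat \<Rightarrow> nat" where "qv i j = qs i (j mod 10)"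

definition ext :: "nat \<Rightarrow> nat \<times> nat \<Rightarrow> bool" where
  "ext n u = (u = (1,0) \<or> (n mod 10 \<in> {1,4} \<and> u = (2, n-1)) \<or> (n mod 10 = 9 \<and> u = (1, n-1)))"

definition f0 :: "nat \<Rightarrow> nat \<times> nat \<Rightarrow> nat" where
  "f0 n u = (if u \<in> GV n then qv (fst u) (snd u) + (if ext n u then 1 else 0) else 0)"

definition wi :: "nat \<Rightarrow> nat \<Rightarrow> nat" where
  "wi a s = [[1, 0, 0, 0, 2, 0, 0, 0, 1, 1], [1, 1, 0, 2, 2, 2, 0, 1, 1, 1], [1, 3, 2, 2, 2, 2, 2, 3, 1, 1], [3, 3, 3, 2, 2, 2, 3, 3, 3, 1]] ! a ! s"
definition wd :: "nat \<Rightarrow> nat \<Rightarrow> nat" where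
  "wd a s = [[1, 3, 2, 1, 2, 3, 2, 1, 3, 2], [1, 0, 2, 3, 2, 1, 2, 4, 3, 2], [1, 2, 4, 3, 2, 1, 0, 2, 3, 2], [3, 2, 1, 3, 2, 1, 3, 2, 1, 2]] ! a ! s"

lemma cmod: "2 \<le> (b::nat) \<Longrightarrow> (b + d - 2) mod 10 = (b mod 10 + d + 8) mod 10"
proof -
  assume "2 \<le> b"
  then obtain c where c: "b = c + 2" by (metis add.commute le_Suc_ex)
  have "(b mod 10 + d + 8) mod 10 = (b + d + 8) mod 10" by (metis mod_add_left_eq add.assoc)
  also have "\<dots> = (c + d + 10) mod 10" using c by (simp add: algebra_simps)
  also have "\<dots> = (c + d) mod 10" by simp
  finally show ?thesis using c by simp
qed

lemma pat:
  assumes "a < 4" "2 \<le> b"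
  shows "0 < qv (wi a (b mod 10)) (b + wd a (b mod 10) - 2) \<and>
         md (a,b) (wi a (b mod 10), b + wd a (b mod 10) - 2) \<le> qv (wi a (b mod 10)) (b + wd a (b mod 10) - 2)"
proof -
  define s where "s = b mod 10"
  have s10: "s < 10" unfolding s_def by simp
  have cm: "\<And>d. (b + d - 2) mod 10 = (s + d + 8) mod 10" using cmod assms(2) s_def by simp
  have a4: "a = 0 \<or> a = 1 \<or> a = 2 \<or> a = 3" using assms by auto
  have ss: "s = 0 \<or> s = 1 \<or> s = 2 \<or> s = 3 \<or> s = 4 \<or> s = 5 \<or> s = 6 \<or> s = 7 \<or> s = 8 \<or> s = 9" using s10 by auto
  show ?thesis unfolding s_def[symmetric] qv_def cm using a4 ss assms(2)
    apply (elim disjE)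
    apply (simp_all add: wi_def wd_def qs_def md_def dd_def)
    done
qed
lemma right_end:
  assumes "n \<ge> 4" "n mod 10 \<in> {1,4,5,9}" "a < 4" "b < n" "n \<le> b + 2"
  shows "\<exists>v\<in>GV n. 0 < f0 n v \<and> md (a,b) v \<le> f0 n v"
proof -
  have a4: "a = 0 \<or> a = 1 \<or> a = 2 \<or> a = 3" using assms by auto
  have bb: "b = n - 1 \<or> b = n - 2" using assms by auto
  consider "n mod 10 = 1" | "n mod 10 = 4" | "n mod 10 = 5" | "n mod 10 = 9" using assms(2) by auto
  then show ?thesis
  proof cases
    case 1
    have dm: "n = 10*(n div 10) + n mod 10" by simp
    obtain m where n: "n = 10*m + 11" using dm assms(1) by (intro that[of "n div 10 - 1"]) (use 1 in linarith)
    have h1: "a = 0 \<Longrightarrow> b = n - 1 \<Longrightarrow> ?thesis"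
      by (rule bexI[of _ "(1, 10*m + 9)"]) (simp_all add: n f0_def ext_def qv_def qs_def GV_eq md_def dd_def mod_Suc)
    have h2: "a = 0 \<Longrightarrow> b = n - 2 \<Longrightarrow> ?thesis"
      by (rule bexI[of _ "(1, 10*m + 9)"]) (simp_all add: n f0_def ext_def qv_def qs_def GV_eq md_def dd_def mod_Suc)
    have h3: "a = 1 \<Longrightarrow> b = n - 1 \<Longrightarrow> ?thesis"
      by (rule bexI[of _ "(2, 10*m + 10)"]) (simp_all add: n f0_def ext_def qv_def qs_def GV_eq md_def dd_def mod_Suc)
    have h4: "a = 1 \<Longrightarrow> b = n - 2 \<Longrightarrow> ?thesis"
      by (rule bexI[of _ "(1, 10*m + 9)"]) (simp_all add: n f0_def ext_def qv_def qs_def GV_eq md_def dd_def mod_Suc)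
    have h5: "a = 2 \<Longrightarrow> b = n - 1 \<Longrightarrow> ?thesis"
      by (rule bexI[of _ "(2, 10*m + 10)"]) (simp_all add: n f0_def ext_def qv_def qs_def GV_eq md_def dd_def mod_Suc)
    have h6: "a = 2 \<Longrightarrow> b = n - 2 \<Longrightarrow> ?thesis"
      by (rule bexI[of _ "(2, 10*m + 10)"]) (simp_all add: n f0_def ext_def qv_def qs_def GV_eq md_def dd_def mod_Suc)
    have h7: "a = 3 \<Longrightarrow> b = n - 1 \<Longrightarrow> ?thesis"
      by (rule bexI[of _ "(2, 10*m + 10)"]) (simp_all add: n f0_def ext_def qv_def qs_def GV_eq md_def dd_def mod_Suc)
    have h8: "a = 3 \<Longrightarrow> b = n - 2 \<Longrightarrow> ?thesis"
      by (rule bexI[of _ "(1, 10*m + 9)"]) (simp_all add: n f0_def ext_def qv_def qs_def GV_eq md_def dd_def mod_Suc)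
    show ?thesis using a4 bb h1 h2 h3 h4 h5 h6 h7 h8 by blast
  next
    case 2
    have dm: "n = 10*(n div 10) + n mod 10" by simp
    obtain m where n: "n = 10*m + 4" using dm assms(1) by (intro that[of "n div 10"]) (use 2 in linarith)
    have h1: "a = 0 \<Longrightarrow> b = n - 1 \<Longrightarrow> ?thesis"
      by (rule bexI[of _ "(0, 10*m + 2)"]) (simp_all add: n f0_def ext_def qv_def qs_def GV_eq md_def dd_def mod_Suc)
    have h2: "a = 0 \<Longrightarrow> b = n - 2 \<Longrightarrow> ?thesis"
      by (rule bexI[of _ "(0, 10*m + 2)"]) (simp_all add: n f0_def ext_def qv_def qs_def GV_eq md_def dd_def mod_Suc)
    have h3: "a = 1 \<Longrightarrow> b = n - 1 \<Longrightarrow> ?thesis"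
      by (rule bexI[of _ "(2, 10*m + 3)"]) (simp_all add: n f0_def ext_def qv_def qs_def GV_eq md_def dd_def mod_Suc)
    have h4: "a = 1 \<Longrightarrow> b = n - 2 \<Longrightarrow> ?thesis"
      by (rule bexI[of _ "(0, 10*m + 2)"]) (simp_all add: n f0_def ext_def qv_def qs_def GV_eq md_def dd_def mod_Suc)
    have h5: "a = 2 \<Longrightarrow> b = n - 1 \<Longrightarrow> ?thesis"
      by (rule bexI[of _ "(2, 10*m + 3)"]) (simp_all add: n f0_def ext_def qv_def qs_def GV_eq md_def dd_def mod_Suc)
    have h6: "a = 2 \<Longrightarrow> b = n - 2 \<Longrightarrow> ?thesis"
      by (rule bexI[of _ "(2, 10*m + 3)"]) (simp_all add: n f0_def ext_def qv_def qs_def GV_eq md_def dd_def mod_Suc)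
    have h7: "a = 3 \<Longrightarrow> b = n - 1 \<Longrightarrow> ?thesis"
      by (rule bexI[of _ "(2, 10*m + 3)"]) (simp_all add: n f0_def ext_def qv_def qs_def GV_eq md_def dd_def mod_Suc)
    have h8: "a = 3 \<Longrightarrow> b = n - 2 \<Longrightarrow> ?thesis"
      by (rule bexI[of _ "(3, 10*m + 1)"]) (simp_all add: n f0_def ext_def qv_def qs_def GV_eq md_def dd_def mod_Suc)
    show ?thesis using a4 bb h1 h2 h3 h4 h5 h6 h7 h8 by blast
  next
    case 3
    have dm: "n = 10*(n div 10) + n mod 10" by simp
    obtain m where n: "n = 10*m + 5" using dm assms(1) by (intro that[of "n div 10"]) (use 3 in linarith)
    have h1: "a = 0 \<Longrightarrow> b = n - 1 \<Longrightarrow> ?thesis"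
      by (rule bexI[of _ "(2, 10*m + 4)"]) (simp_all add: n f0_def ext_def qv_def qs_def GV_eq md_def dd_def mod_Suc)
    have h2: "a = 0 \<Longrightarrow> b = n - 2 \<Longrightarrow> ?thesis"
      by (rule bexI[of _ "(0, 10*m + 2)"]) (simp_all add: n f0_def ext_def qv_def qs_def GV_eq md_def dd_def mod_Suc)
    have h3: "a = 1 \<Longrightarrow> b = n - 1 \<Longrightarrow> ?thesis"
      by (rule bexI[of _ "(2, 10*m + 4)"]) (simp_all add: n f0_def ext_def qv_def qs_def GV_eq md_def dd_def mod_Suc)
    have h4: "a = 1 \<Longrightarrow> b = n - 2 \<Longrightarrow> ?thesis"
      by (rule bexI[of _ "(2, 10*m + 4)"]) (simp_all add: n f0_def ext_def qv_def qs_def GV_eq md_def dd_def mod_Suc)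
    have h5: "a = 2 \<Longrightarrow> b = n - 1 \<Longrightarrow> ?thesis"
      by (rule bexI[of _ "(2, 10*m + 4)"]) (simp_all add: n f0_def ext_def qv_def qs_def GV_eq md_def dd_def mod_Suc)
    have h6: "a = 2 \<Longrightarrow> b = n - 2 \<Longrightarrow> ?thesis"
      by (rule bexI[of _ "(2, 10*m + 4)"]) (simp_all add: n f0_def ext_def qv_def qs_def GV_eq md_def dd_def mod_Suc)
    have h7: "a = 3 \<Longrightarrow> b = n - 1 \<Longrightarrow> ?thesis"
      by (rule bexI[of _ "(2, 10*m + 4)"]) (simp_all add: n f0_def ext_def qv_def qs_def GV_eq md_def dd_def mod_Suc)
    have h8: "a = 3 \<Longrightarrow> b = n - 2 \<Longrightarrow> ?thesis"
      by (rule bexI[of _ "(2, 10*m + 4)"]) (simp_all add: n f0_def ext_def qv_def qs_def GV_eq md_def dd_def mod_Suc)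
    show ?thesis using a4 bb h1 h2 h3 h4 h5 h6 h7 h8 by blast
  next
    case 4
    have dm: "n = 10*(n div 10) + n mod 10" by simp
    obtain m where n: "n = 10*m + 9" using dm assms(1) by (intro that[of "n div 10"]) (use 4 in linarith)
    have h1: "a = 0 \<Longrightarrow> b = n - 1 \<Longrightarrow> ?thesis"
      by (rule bexI[of _ "(1, 10*m + 8)"]) (simp_all add: n f0_def ext_def qv_def qs_def GV_eq md_def dd_def mod_Suc)
    have h2: "a = 0 \<Longrightarrow> b = n - 2 \<Longrightarrow> ?thesis"
      by (rule bexI[of _ "(0, 10*m + 6)"]) (simp_all add: n f0_def ext_def qv_def qs_def GV_eq md_def dd_def mod_Suc)
    have h3: "a = 1 \<Longrightarrow> b = n - 1 \<Longrightarrow> ?thesis"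
      by (rule bexI[of _ "(1, 10*m + 8)"]) (simp_all add: n f0_def ext_def qv_def qs_def GV_eq md_def dd_def mod_Suc)
    have h4: "a = 1 \<Longrightarrow> b = n - 2 \<Longrightarrow> ?thesis"
      by (rule bexI[of _ "(1, 10*m + 8)"]) (simp_all add: n f0_def ext_def qv_def qs_def GV_eq md_def dd_def mod_Suc)
    have h5: "a = 2 \<Longrightarrow> b = n - 1 \<Longrightarrow> ?thesis"
      by (rule bexI[of _ "(1, 10*m + 8)"]) (simp_all add: n f0_def ext_def qv_def qs_def GV_eq md_def dd_def mod_Suc)
    have h6: "a = 2 \<Longrightarrow> b = n - 2 \<Longrightarrow> ?thesis"
      by (rule bexI[of _ "(3, 10*m + 7)"]) (simp_all add: n f0_def ext_def qv_def qs_def GV_eq md_def dd_def mod_Suc)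
    have h7: "a = 3 \<Longrightarrow> b = n - 1 \<Longrightarrow> ?thesis"
      by (rule bexI[of _ "(3, 10*m + 7)"]) (simp_all add: n f0_def ext_def qv_def qs_def GV_eq md_def dd_def mod_Suc)
    have h8: "a = 3 \<Longrightarrow> b = n - 2 \<Longrightarrow> ?thesis"
      by (rule bexI[of _ "(3, 10*m + 7)"]) (simp_all add: n f0_def ext_def qv_def qs_def GV_eq md_def dd_def mod_Suc)
    show ?thesis using a4 bb h1 h2 h3 h4 h5 h6 h7 h8 by blast
  qed
qed


lemma qs_le2: "qs i s \<le> 2" by (simp add: qs_def)
lemma qs_pos: "0 < qs i s \<Longrightarrow> i < 4" by (auto simp: qs_def split: if_splits)

lemma f0_ge: "(i,c) \<in> GV n \<Longrightarrow> qv i c \<le> f0 n (i,c)" by (simp add: f0_def)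

lemma f0_dom:
  assumes "n \<ge> 4" "n mod 10 \<in> {1,4,5,9}" "u \<in> GV n"
  shows "\<exists>v\<in>GV n. 0 < f0 n v \<and> md u v \<le> f0 n v"
proof -
  obtain a b where u: "u = (a,b)" by fastforce
  have ab: "a < 4" "b < n" using assms(3) u by (auto simp: GV_eq)
  consider "b \<le> 1" | "2 \<le> b" "b + 2 < n" | "n \<le> b + 2" by linarith
  then show ?thesis
  proof cases
    case 1
    have g10: "(1,0) \<in> GV n" "1 \<le> f0 n (1,0)" using assms(1) by (auto simp: GV_eq f0_def ext_def)
    have g02: "(0,2) \<in> GV n" "1 \<le> f0 n (0,2)" using assms(1) f0_ge[of 0 2 n]
      by (auto simp: GV_eq qv_def qs_def)
    have g31: "(3,1) \<in> GV n" "1 \<le> f0 n (3,1)" using assms(1) f0_ge[of 3 1 n]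
      by (auto simp: GV_eq qv_def qs_def)
    have a4: "a = 0 \<or> a = 1 \<or> a = 2 \<or> a = 3" using ab by auto
    have b2: "b = 0 \<or> b = 1" using 1 by auto
    show ?thesis unfolding u using a4 b2
    proof (elim disjE)
    qed (use g10 g02 g31 in \<open>force simp: md_def dd_def\<close>)+
  next
    case 2
    define i where "i = wi a (b mod 10)"
    define c where "c = b + wd a (b mod 10) - 2"
    have p: "0 < qv i c" "md (a,b) (i,c) \<le> qv i c" using pat[OF ab(1) 2(1)] unfolding i_def c_def by auto
    have i4: "i < 4" using p(1) qs_pos unfolding qv_def by blast
    have "qv i c \<le> 2" using qs_le2 unfolding qv_def by blast
    then have "c \<le> b + 2" using p(2) by (simp add: md_def dd_def split: if_splits)
    then have inG: "(i,c) \<in> GV n" using i4 2 by (simp add: GV_eq)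
    show ?thesis unfolding u
      by (rule bexI[OF _ inG]) (use p f0_ge[OF inG] in auto)
  next
    case 3
    show ?thesis unfolding u by (rule right_end[OF assms(1,2) ab 3])
  qed
qed

definition cq :: "nat \<Rightarrow> nat" where "cq s = [0,1,1,0,2,0,1,1,0,2] ! s"
definition pre :: "nat \<Rightarrow> nat" where "pre s = [0,0,1,2,2,4,4,5,6,6] ! s"

lemma cq_eq: "(\<Sum>i\<in>{0..<4::nat}. qv i j) = cq (j mod 10)"
proof -
  have s: "{0..<4::nat} = {0,1,2,3}" by auto
  have "j mod 10 < 10" by simp
  then have "j mod 10 = 0 \<or> j mod 10 = 1 \<or> j mod 10 = 2 \<or> j mod 10 = 3 \<or> j mod 10 = 4 \<or> j mod 10 = 5 \<or> j mod 10 = 6 \<or> j mod 10 = 7 \<or> j mod 10 = 8 \<or> j mod 10 = 9" by presburger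
  then show ?thesis unfolding s qv_def by (elim disjE) (simp_all add: qs_def cq_def)
qed

lemma cq_sum: "(\<Sum>j\<in>{0..<n}. cq (j mod 10)) = 8 * (n div 10) + pre (n mod 10)"
proof (induction n)
  case 0 then show ?case by (simp add: pre_def)
next
  case (Suc n)
  have "n mod 10 < 10" by simp
  then have "n mod 10 = 0 \<or> n mod 10 = 1 \<or> n mod 10 = 2 \<or> n mod 10 = 3 \<or> n mod 10 = 4 \<or> n mod 10 = 5 \<or> n mod 10 = 6 \<or> n mod 10 = 7 \<or> n mod 10 = 8 \<or> n mod 10 = 9" by presburger
  then show ?case using Suc by (elim disjE) (simp_all add: mod_Suc div_Suc cq_def pre_def)
qed

lemma ext_set:
  assumes "n \<ge> 4" "n mod 10 \<in> {1,4,5,9}"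
  shows "card {u\<in>GV n. ext n u} = (if n mod 10 = 5 then 1 else 2)"
proof -
  have "{u\<in>GV n. ext n u} = (if n mod 10 = 5 then {(1,0)} else if n mod 10 = 9 then {(1,0),(1,n-1)} else {(2,n-1),(1,0)})"
    using assms by (auto simp: GV_eq ext_def)
  then show ?thesis using assms by auto
qed

lemma ext_q0:
  assumes "n \<ge> 4" "ext n (i,j)"
  shows "qv i j = 0"
proof -
  have m: "n mod 10 = (if Suc ((n-1) mod 10) = 10 then 0 else Suc ((n-1) mod 10))"
    using mod_Suc[of "n-1" 10] assms(1) by simp
  show ?thesis using assms(2) m by (auto simp: ext_def qv_def qs_def split: if_splits)
qed

lemma f0_cost:
  assumes "n \<ge> 4" "n mod 10 \<in> {1,4,5,9}"
  shows "broadcast_cost (GV n) (f0 n) = 8 * (n div 10) + cfun (n mod 10)"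
proof -
  have "broadcast_cost (GV n) (f0 n) = (\<Sum>u\<in>GV n. qv (fst u) (snd u) + (if ext n u then 1 else 0))"
    unfolding broadcast_cost_def by (rule sum.cong) (auto simp: f0_def)
  also have "\<dots> = (\<Sum>u\<in>GV n. qv (fst u) (snd u)) + (\<Sum>u\<in>GV n. if ext n u then 1 else 0)"
    by (rule sum.distrib)
  also have "(\<Sum>u\<in>GV n. if ext n u then 1 else 0) = card {u\<in>GV n. ext n u}"
    by (simp add: sum.If_cases GV_eq Int_def)
  also have "(\<Sum>u\<in>GV n. qv (fst u) (snd u)) = (\<Sum>i\<in>{0..<4::nat}. \<Sum>j\<in>{0..<n}. qv i j)"
    unfolding GV_eq by (simp add: sum.cartesian_product split_def)
  also have "\<dots> = (\<Sum>j\<in>{0..<n}. \<Sum>i\<in>{0..<4::nat}. qv i j)" by (rule sum.swap)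
  also have "\<dots> = 8 * (n div 10) + pre (n mod 10)" by (simp add: cq_eq cq_sum)
  finally show ?thesis using assms ext_set by (auto simp: pre_def cfun_def)
qed

lemma f0_dom2:
  assumes "n \<ge> 4" "n mod 10 \<in> {1,4,5,9}"
  shows "dom_broadcast2 (GV n) GE (f0 n)"
  unfolding dom_broadcast2_def
proof (intro conjI ballI)
  fix v assume v: "v \<in> GV n"
  obtain i j where ij: "v = (i,j)" by fastforce
  show "f0 n v \<le> 2"
  proof (cases "ext n v")
    case True then show ?thesis using ext_q0[OF assms(1)] ij by (simp add: f0_def)
  next
    case False then show ?thesis using qs_le2 ij by (simp add: f0_def qv_def)
  qed
next
  fix u assume u: "u \<in> GV n"
  then obtain v where "v \<in> GV n" "0 < f0 n v" "md u v \<le> f0 n v" using f0_dom[OF assms] by blast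
  then show "\<exists>v\<in>GV n. 0 < f0 n v \<and> gdist (GV n) GE u v \<le> f0 n v" using gdist_md u by auto
qed

lemma gamma_le: "dom_broadcast2 (GV n) GE f \<Longrightarrow> grid_gamma 4 n \<le> broadcast_cost (GV n) f"
  unfolding grid_gamma_def gamma_b2_def by (rule Least_le) blast

lemma gamma_ach: "\<exists>f. dom_broadcast2 (GV n) GE f \<and> grid_gamma 4 n = broadcast_cost (GV n) f"
proof -
  have "dom_broadcast2 (GV n) GE (\<lambda>_. 1)"
    unfolding dom_broadcast2_def
  proof (intro conjI ballI)
    fix u assume u: "u \<in> GV n"
    show "\<exists>v\<in>GV n. 0 < (1::nat) \<and> gdist (GV n) GE u v \<le> 1"
      by (rule bexI[of _ u]) (use gdist_md[OF u u] u in \<open>auto simp: md_def dd_def\<close>)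
  qed auto
  then have "\<exists>c f. dom_broadcast2 (GV n) GE f \<and> broadcast_cost (GV n) f = c" by blast
  then have "\<exists>f. dom_broadcast2 (GV n) GE f \<and> broadcast_cost (GV n) f = gamma_b2 (GV n) GE"
    unfolding gamma_b2_def by (rule LeastI_ex)
  then show ?thesis unfolding grid_gamma_def by metis
qed

lemma arith_bound: "16*n+6 \<le> 20*(g::nat) \<Longrightarrow> 8 * (n div 10) + cfun (n mod 10) \<le> g"
proof -
  assume h: "16*n+6 \<le> 20*g"
  define q where "q = n div 10"
  define r where "r = n mod 10"
  have dm: "n = 10*q + r" unfolding q_def r_def by simp
  have "r < 10" unfolding r_def by simp
  then have rr: "r = 0 \<or> r = 1 \<or> r = 2 \<or> r = 3 \<or> r = 4 \<or> r = 5 \<or> r = 6 \<or> r = 7 \<or> r = 8 \<or> r = 9" by presburger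
  have h2: "160*q + 16*r + 6 \<le> 20*g" using h dm by simp
  have "8 * q + cfun r \<le> g" using rr h2 by (elim disjE) (simp_all add: cfun_def; presburger)+
  then show ?thesis unfolding q_def r_def .
qed

theorem corollary4p10:
  shows "(\<forall>n::nat. n \<ge> 4 \<longrightarrow> 8 * (n div 10) + cfun (n mod 10) \<le> grid_gamma 4 n) \<and>
         (\<forall>n::nat. n \<ge> 4 \<longrightarrow> n mod 10 \<in> {1, 4, 5, 9} \<longrightarrow>
           grid_gamma 4 n = 8 * (n div 10) + cfun (n mod 10))"
proof -
  have lb: "8 * (n div 10) + cfun (n mod 10) \<le> grid_gamma 4 n" if "n \<ge> 4" for n
  proof -
    obtain f where f: "dom_broadcast2 (GV n) GE f" "grid_gamma 4 n = broadcast_cost (GV n) f"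
      using gamma_ach by blast
    have "16*n+6 \<le> 20 * grid_gamma 4 n" using lower[OF f(1)] that f(2) by simp
    then show ?thesis by (rule arith_bound)
  qed
  have ub: "grid_gamma 4 n \<le> 8 * (n div 10) + cfun (n mod 10)" if "n \<ge> 4" "n mod 10 \<in> {1, 4, 5, 9}" for n
    using gamma_le[OF f0_dom2[OF that]] f0_cost[OF that] by simp
  show ?thesis using lb ub by (meson le_antisym)
qed
end
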